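(* Let $g$ be a prior density on $(0,\infty)$ and $\{F_\mu\}_{\mu>0}$ a family of non-negative reward distributions with $F_\mu$ having mean $\mu$, with $\lambda=\int_0^\infty E_\mu(X\mid X>0)g(\mu)\,d\mu<\infty$. Assume (A1): $g(\mu)\sim\alpha\mu^{\beta-1}$ as $\mu\to0$ for some $\alpha,\beta>0$; (A2): there is $a_1>0$ with $P_\mu(X>0)\ge a_1\min(\mu,1)$ for all $\mu>0$; and either (B1) or (B2), where $M_\mu(\theta)=E_\mu e^{\theta X}$ and: (B1) rewards are non-negative integer-valued; for every $0<\delta\le1$ there is $\theta_\delta>0$ with $M_\mu(\theta)\le e^{(1+\delta)\theta\mu}$ and $M_\mu(-\theta)\le e^{-(1-\delta)\theta\mu}$ for all $\mu>0$, $0\le\theta\le\theta_\delta$; $P_\mu(X>0)\le a_2\mu$ for some $a_2>0$; $E_\mu X^4=O(\mu)$ as $\mu\to0$; (B2) rewards are continuous with $\sup_{\mu>0}P_\mu(X\le\gamma\mu)\to0$ as $\gamma\to0$; $E_\mu X^4=O(\mu)$ as $\mu\to0$; for every $0<\delta\le1$ there is $\tau_\delta>0$ with $M_\mu(\theta)\le e^{(1+\delta)\theta\mu}$ and $M_\mu(-\theta)\le e^{-(1-\delta)\theta\mu}$ whenever $0<\theta\mu\le\tau_\delta$; and for each $t\ge1$ there is $\xi_t>0$ with $\sup_{\mu\le\xi_t}P_\mu(\hat\sigma_t^2\le\gamma\mu^2)\to0$ as $\gamma\to0$. Let $X_1,X_2,\ldots$ be i.i.d. $F_\mu$, $S_t=\sum_{u=1}^tX_u$.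 Let $b_n\to\infty$ with $b_n=o(n^\delta)$ for all $\delta>0$, $\zeta_n\sim Cn^{-\frac1{\beta+1}}$ with $C=\big(\frac{\lambda\beta(\beta+1)}{\alpha}\big)^{\frac1{\beta+1}}$, $d_n=n^{-\omega}$ for some $0<\omega<\frac1{\beta+1}$, and $T_b=\inf\{t:S_t>b_nt\zeta_n\}$. Then as $n\to\infty$, $$\sup_{\mu\ge d_n}\big[\min(\mu,1)E_\mu T_b\big]=O(1),\qquad E_g\big(T_b\,\mu\,\mathbf 1_{\{\mu\ge d_n\}}\big)\le\lambda+o(1),$$ where in the second expression $\mu\sim g$ and, given $\mu$, $T_b$ is computed from rewards i.i.d. $F_\mu$.
   Context: $\hat\sigma_t^2=t^{-1}\sum_{u=1}^t(X_u-\bar X_t)^2$, $\bar X_t=S_t/t$, for $X_u$ i.i.d. $F_\mu$. $E_\mu,P_\mu$ denote expectation/probability under $F_\mu$. *)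

theory Defs
  imports "HOL-Probability.Probability" "HOL-Library.Landau_Symbols"
begin

definition mgf :: "real measure \<Rightarrow> real \<Rightarrow> ennreal" where
  "mgf M \<theta> = (\<integral>\<^sup>+ x. ennreal (exp (\<theta> * x)) \<partial>M)"

definition cond_mean_pos :: "real measure \<Rightarrow> real" where
  "cond_mean_pos M = (\<integral> x. x * indicator {0<..} x \<partial>M) / measure M {0<..}"

definition iid_seq :: "real measure \<Rightarrow> (nat \<Rightarrow> real) measure" where
  "iid_seq M = (\<Pi>\<^sub>M i\<in>(UNIV::nat set). M)"

text \<open>S_t = X_1 + ... + X_t (the sequence is indexed from 0).\<close>
definition psum :: "(nat \<Rightarrow> real) \<Rightarrow> nat \<Rightarrow> real" where
  "psum x t = (\<Sum>u<t. x u)"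

definition sample_var :: "(nat \<Rightarrow> real) \<Rightarrow> nat \<Rightarrow> real" where
  "sample_var x t = (\<Sum>u<t. (x u - psum x t / real t)^2) / real t"

text \<open>T = inf {t \<ge> 1 : S_t > c t}, with inf {} = \<infinity>.\<close>
definition stop_time :: "real \<Rightarrow> (nat \<Rightarrow> real) \<Rightarrow> ennreal" where
  "stop_time c x = (INF t\<in>{t::nat. 1 \<le> t \<and> psum x t > c * real t}. ennreal (real t))"

definition fourth_moment_O :: "(real \<Rightarrow> real measure) \<Rightarrow> bool" where
  "fourth_moment_O F \<longleftrightarrow>
     (\<exists>K. \<forall>\<^sub>F \<mu> in at_right 0. (\<integral>\<^sup>+ x. ennreal (x ^ 4) \<partial>F \<mu>) \<le> ennreal (K * \<mu>))"

definition cond_B1 :: "(real \<Rightarrow> real measure) \<Rightarrow> bool" where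
  "cond_B1 F \<longleftrightarrow>
     (\<forall>\<mu>>0. AE x in F \<mu>. x \<in> \<nat>) \<and>
     (\<forall>\<delta>. 0 < \<delta> \<and> \<delta> \<le> 1 \<longrightarrow> (\<exists>\<theta>\<delta>>0. \<forall>\<mu>>0. \<forall>\<theta>. 0 \<le> \<theta> \<and> \<theta> \<le> \<theta>\<delta> \<longrightarrow>
        mgf (F \<mu>) \<theta> \<le> ennreal (exp ((1 + \<delta>) * \<theta> * \<mu>)) \<and>
        mgf (F \<mu>) (- \<theta>) \<le> ennreal (exp (- (1 - \<delta>) * \<theta> * \<mu>)))) \<and>
     (\<exists>a2>0. \<forall>\<mu>>0. measure (F \<mu>) {0<..} \<le> a2 * \<mu>) \<and>
     fourth_moment_O F"

definition cond_B2 :: "(real \<Rightarrow> real measure) \<Rightarrow> bool" where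
  "cond_B2 F \<longleftrightarrow>
     (\<forall>\<mu>>0. \<forall>x. measure (F \<mu>) {x} = 0) \<and>
     ((\<lambda>\<gamma>. SUP \<mu>\<in>{0<..}. measure (F \<mu>) {..\<gamma> * \<mu>}) \<longlongrightarrow> 0) (at_right 0) \<and>
     fourth_moment_O F \<and>
     (\<forall>\<delta>. 0 < \<delta> \<and> \<delta> \<le> 1 \<longrightarrow> (\<exists>\<tau>>0. \<forall>\<mu>>0. \<forall>\<theta>. 0 < \<theta> * \<mu> \<and> \<theta> * \<mu> \<le> \<tau> \<longrightarrow>
        mgf (F \<mu>) \<theta> \<le> ennreal (exp ((1 + \<delta>) * \<theta> * \<mu>)) \<and>
        mgf (F \<mu>) (- \<theta>) \<le> ennreal (exp (- (1 - \<delta>) * \<theta> * \<mu>)))) \<and>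
     (\<forall>t::nat. 2 \<le> t \<longrightarrow> (\<exists>\<xi>>0.
        ((\<lambda>\<gamma>. SUP \<mu>\<in>{0<..\<xi>}. measure (iid_seq (F \<mu>))
              {x \<in> space (iid_seq (F \<mu>)). sample_var x t \<le> \<gamma> * \<mu>^2}) \<longlongrightarrow> 0) (at_right 0)))"

end

theory Submission
  imports Defs
begin



lemma iid_prod_integral:
  assumes M: "prob_space M" and f: "f \<in> borel_measurable M"
  shows "(\<integral>\<^sup>+ x. (\<Prod>u<t. f (x u)) \<partial>iid_seq M) = (\<integral>\<^sup>+ y. f y \<partial>M) ^ t"
proof -
  interpret P: product_prob_space "\<lambda>_. M" UNIV
    using M by (simp add: product_prob_space_def product_sigma_finite_def prob_space_imp_sigma_finite product_prob_space_axioms_def)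
  have d: "distr (iid_seq M) (PiM {..<t} (\<lambda>_. M)) (\<lambda>x. restrict x {..<t}) = PiM {..<t} (\<lambda>_. M)"
    unfolding iid_seq_def by (rule P.distr_PiM_restrict_finite) auto
  have "(\<integral>\<^sup>+ x. (\<Prod>u<t. f (x u)) \<partial>iid_seq M) = (\<integral>\<^sup>+ x. (\<Prod>u<t. f (restrict x {..<t} u)) \<partial>iid_seq M)"
    by (intro nn_integral_cong prod.cong) auto
  also have "\<dots> = (\<integral>\<^sup>+ x. (\<Prod>u<t. f (x u)) \<partial>distr (iid_seq M) (PiM {..<t} (\<lambda>_. M)) (\<lambda>x. restrict x {..<t}))"
    using f by (subst nn_integral_distr) (simp_all add: iid_seq_def measurable_restrict_subset, measurable)
  also have "\<dots> = (\<integral>\<^sup>+ x. (\<Prod>u<t. f (x u)) \<partial>PiM {..<t} (\<lambda>_. M))" by (simp add: d)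
  also have "\<dots> = (\<Prod>u<t. (\<integral>\<^sup>+ y. f y \<partial>M))"
    by (rule P.product_nn_integral_prod) (auto simp: f)
  finally show ?thesis by simp
qed

lemma iid_AE:
  assumes M: "prob_space M" and ae: "AE y in M. Q y"
  shows "AE x in iid_seq M. \<forall>u. Q (x u)"
proof -
  interpret P: product_prob_space "\<lambda>_. M" UNIV
    using M by (simp add: product_prob_space_def product_sigma_finite_def prob_space_imp_sigma_finite product_prob_space_axioms_def)
  show ?thesis unfolding iid_seq_def
    by (subst AE_all_countable) (auto intro!: P.AE_component ae)
qed

lemma psum_meas[measurable]: "sets M = sets borel \<Longrightarrow> (\<lambda>x. psum x t) \<in> borel_measurable (iid_seq M)"
  unfolding psum_def iid_seq_def
  by (intro borel_measurable_sum measurable_compose[OF measurable_component_singleton]) (auto simp: measurable_def)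

lemma ennreal_ge_nats_top:
  fixes y :: ennreal assumes "\<And>m::nat. ennreal (real m) \<le> y" shows "y = top"
proof -
  have "(SUP m. of_nat m :: ennreal) \<le> y"
    using assms by (intro SUP_least) (simp add: ennreal_of_nat_eq_real_of_nat)
  then show ?thesis by (simp add: ennreal_SUP_of_nat_eq_top top_unique)
qed

lemma stop_time_le:
  "stop_time c x \<le> 1 + (\<Sum>t. indicator {x. psum x (Suc t) \<le> c * real (Suc t)} x)"
proof -
  let ?R = "1 + (\<Sum>t. indicator {x. psum x (Suc t) \<le> c * real (Suc t)} x :: ennreal)"
  have key: "ennreal (1 + real m) \<le> ?R" if "\<forall>t<m. psum x (Suc t) \<le> c * real (Suc t)" for m
  proof -
    have "(\<Sum>t<m. indicator {x. psum x (Suc t) \<le> c * real (Suc t)} x :: ennreal)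
          \<le> (\<Sum>t. indicator {x. psum x (Suc t) \<le> c * real (Suc t)} x)"
      by (rule sum_le_suminf[OF summableI]) auto
    moreover have "(\<Sum>t<m. indicator {x. psum x (Suc t) \<le> c * real (Suc t)} x :: ennreal) = of_nat m"
      using that by (simp add: indicator_def)
    ultimately have "ennreal (real m) \<le> (\<Sum>t. indicator {x. psum x (Suc t) \<le> c * real (Suc t)} x)"
      by (simp add: ennreal_of_nat_eq_real_of_nat)
    then have "1 + ennreal (real m) \<le> ?R" by (rule add_left_mono)
    moreover have "ennreal (1 + real m) = 1 + ennreal (real m)"
      using ennreal_plus[of 1 "real m"] by simp
    ultimately show ?thesis by simp
  qed
  show ?thesis
  proof (cases "\<exists>k. 1 \<le> k \<and> psum x k > c * real k")
    case True
    define k where "k = (LEAST k. 1 \<le> k \<and> psum x k > c * real k)"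
    have k: "1 \<le> k \<and> psum x k > c * real k" unfolding k_def by (rule LeastI_ex[OF True])
    have kmin: "\<not> (1 \<le> j \<and> psum x j > c * real j)" if "j < k" for j
      using not_less_Least[OF that[unfolded k_def]] by blast
    have "stop_time c x \<le> ennreal (real k)"
      unfolding stop_time_def using k by (intro INF_lower) auto
    also have "\<dots> \<le> ?R"
    proof -
      have "ennreal (1 + real (k - 1)) \<le> ?R"
      proof (rule key, intro allI impI)
        fix t assume "t < k - 1"
        then have "Suc t < k" by simp
        from kmin[OF this] show "psum x (Suc t) \<le> c * real (Suc t)" by simp
      qed
      then show ?thesis using k by (simp add: of_nat_diff)
    qed
    finally show ?thesis .
  next
    case False
    have "?R = top"
    proof (rule ennreal_ge_nats_top)
      fix m :: nat
      have "ennreal (1 + real m) \<le> ?R" by (rule key) (use False in \<open>auto simp: not_less\<close>)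
      then show "ennreal (real m) \<le> ?R" by (rule order_trans[rotated]) simp
    qed
    then show ?thesis by simp
  qed
qed

lemma space_iid: "sets M = sets borel \<Longrightarrow> space (iid_seq M) = UNIV"
  unfolding iid_seq_def by (simp add: space_PiM sets_eq_imp_space_eq[where M'=borel])

lemma prob_iid: "prob_space M \<Longrightarrow> prob_space (iid_seq M)"
  unfolding iid_seq_def by (intro prob_space_PiM) auto

lemma psum_set_meas:
  assumes "sets M = sets borel"
  shows "{x. psum x s \<le> a} \<in> sets (iid_seq M)"
proof -
  have "{x. psum x s \<le> a} = (\<lambda>x. psum x s) -` {..a} \<inter> space (iid_seq M)"
    using space_iid[OF assms] by auto
  also have "\<dots> \<in> sets (iid_seq M)"
    by (rule measurable_sets[OF psum_meas[OF assms]]) auto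
  finally show ?thesis .
qed

lemma ET_le:
  assumes M: "prob_space M" and Mb: "sets M = sets borel"
    and bnd: "\<And>t. emeasure (iid_seq M) {x. psum x (Suc t) \<le> c * real (Suc t)} \<le> ennreal (q (Suc t))"
    and q0: "1 \<le> q 0" and qpos: "\<And>t. 0 \<le> q t" and qs: "summable q"
  shows "(\<integral>\<^sup>+ x. stop_time c x \<partial>iid_seq M) \<le> ennreal (suminf q)"
proof -
  interpret P: prob_space "iid_seq M" by (rule prob_iid[OF M])
  have sp: "space (iid_seq M) = UNIV" by (rule space_iid[OF Mb])
  have meas: "\<And>t. (\<lambda>x. indicator {x. psum x (Suc t) \<le> c * real (Suc t)} x :: ennreal) \<in> borel_measurable (iid_seq M)"
    by (intro borel_measurable_indicator psum_set_meas[OF Mb])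
  have measS: "(\<lambda>x. \<Sum>t. indicator {x. psum x (Suc t) \<le> c * real (Suc t)} x :: ennreal) \<in> borel_measurable (iid_seq M)"
    by (rule borel_measurable_suminf_order) (rule meas)
  have "(\<integral>\<^sup>+ x. stop_time c x \<partial>iid_seq M)
     \<le> (\<integral>\<^sup>+ x. 1 + (\<Sum>t. indicator {x. psum x (Suc t) \<le> c * real (Suc t)} x) \<partial>iid_seq M)"
    by (intro nn_integral_mono stop_time_le)
  also have "\<dots> = (\<integral>\<^sup>+ x. 1 \<partial>iid_seq M) + (\<integral>\<^sup>+ x. (\<Sum>t. indicator {x. psum x (Suc t) \<le> c * real (Suc t)} x) \<partial>iid_seq M)"
    by (rule nn_integral_add[OF borel_measurable_const measS])
  also have "\<dots> = 1 + (\<Sum>t. emeasure (iid_seq M) {x. psum x (Suc t) \<le> c * real (Suc t)})"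
    by (subst nn_integral_suminf[OF meas]) (simp add: P.emeasure_space_1[unfolded sp] sp psum_set_meas[OF Mb] del: of_nat_Suc)
  also have "\<dots> \<le> 1 + (\<Sum>t. ennreal (q (Suc t)))"
    by (intro add_left_mono suminf_le bnd) auto
  also have "\<dots> = 1 + ennreal (\<Sum>t. q (Suc t))"
    using qs qpos by (subst suminf_ennreal2) (auto simp: summable_Suc_iff)
  also have "\<dots> = ennreal (1 + (\<Sum>t. q (Suc t)))"
    using qs qpos by (simp add: ennreal_plus suminf_nonneg summable_Suc_iff)
  also have "\<dots> \<le> ennreal (suminf q)"
    using qs q0 by (intro ennreal_leI) (simp add: suminf_split_head)
  finally show ?thesis .
qed



lemma emeasure_psum_le_int:
  assumes Mb: "sets M = sets borel"
  shows "emeasure (iid_seq M) {x. psum x t \<le> a} = (\<integral>\<^sup>+ x. indicator {x. psum x t \<le> a} x \<partial>iid_seq M)"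
  using psum_set_meas[OF Mb] by (simp add: space_iid[OF Mb])

lemma prod_meas:
  fixes f :: "real \<Rightarrow> ennreal"
  assumes f[measurable]: "f \<in> borel_measurable M"
  shows "(\<lambda>x. \<Prod>u<t. f (x u)) \<in> borel_measurable (iid_seq M)"
  unfolding iid_seq_def by measurable

lemma chernoff:
  assumes M: "prob_space M" and Mb: "sets M = sets borel" and th: "0 \<le> \<theta>"
    and mg: "mgf M (- \<theta>) \<le> ennreal (exp (- (1/2) * \<theta> * \<mu>))" and c: "c \<le> \<mu> / 4"
  shows "emeasure (iid_seq M) {x. psum x t \<le> c * real t} \<le> ennreal (exp (- (\<theta> * \<mu> / 4) * real t))"
proof -
  have fm: "(\<lambda>y. ennreal (exp (- \<theta> * y))) \<in> borel_measurable M"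
    using Mb by (simp add: measurable_cong_sets[OF Mb refl])
  have "emeasure (iid_seq M) {x. psum x t \<le> c * real t} = (\<integral>\<^sup>+ x. indicator {x. psum x t \<le> c * real t} x \<partial>iid_seq M)"
    by (rule emeasure_psum_le_int[OF Mb])
  also have "\<dots> \<le> (\<integral>\<^sup>+ x. ennreal (exp (\<theta> * c * real t)) * (\<Prod>u<t. ennreal (exp (- \<theta> * x u))) \<partial>iid_seq M)"
  proof (rule nn_integral_mono)
    fix x
    have "(\<Prod>u<t. ennreal (exp (- \<theta> * x u))) = ennreal (\<Prod>u<t. exp (- \<theta> * x u))"
      by (simp add: prod_ennreal)
    also have "(\<Prod>u<t. exp (- \<theta> * x u)) = exp (- \<theta> * psum x t)"
      by (simp add: psum_def exp_sum sum_distrib_left)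
    finally have e: "ennreal (exp (\<theta> * c * real t)) * (\<Prod>u<t. ennreal (exp (- \<theta> * x u)))
        = ennreal (exp (\<theta> * (c * real t - psum x t)))"
      by (simp add: ennreal_mult[symmetric] exp_add[symmetric] algebra_simps)
    show "indicator {x. psum x t \<le> c * real t} x \<le> ennreal (exp (\<theta> * c * real t)) * (\<Prod>u<t. ennreal (exp (- \<theta> * x u)))"
      unfolding e using th by (auto simp: indicator_def)
  qed
  also have "\<dots> = ennreal (exp (\<theta> * c * real t)) * (\<integral>\<^sup>+ x. (\<Prod>u<t. ennreal (exp (- \<theta> * x u))) \<partial>iid_seq M)"
    by (rule nn_integral_cmult) (rule prod_meas[OF fm])
  also have "\<dots> = ennreal (exp (\<theta> * c * real t)) * mgf M (- \<theta>) ^ t"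
    by (subst iid_prod_integral[OF M fm]) (simp add: mgf_def)
  also have "\<dots> \<le> ennreal (exp (\<theta> * c * real t)) * ennreal (exp (- (1/2) * \<theta> * \<mu>)) ^ t"
    by (intro mult_left_mono power_mono mg) auto
  also have "\<dots> = ennreal (exp (\<theta> * real t * (c - \<mu> / 2)))"
    by (simp add: ennreal_power ennreal_mult[symmetric] exp_of_nat_mult[symmetric] exp_add[symmetric] algebra_simps)
  also have "\<dots> \<le> ennreal (exp (- (\<theta> * \<mu> / 4) * real t))"
  proof -
    have "\<theta> * real t * (c - \<mu> / 2) \<le> \<theta> * real t * (- \<mu> / 4)"
      using th c by (intro mult_left_mono) auto
    then show ?thesis by (intro ennreal_leI) (simp add: algebra_simps)
  qed
  finally show ?thesis .
qed

lemma zero_bound: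
  assumes M: "prob_space M" and Mb: "sets M = sets borel" and nat: "AE y in M. y \<in> \<nat>"
    and ct: "c * real t < 1"
  shows "emeasure (iid_seq M) {x. psum x t \<le> c * real t} \<le> emeasure M {..0} ^ t"
proof -
  have fm: "(\<lambda>y. indicator {..0::real} y :: ennreal) \<in> borel_measurable M"
    by (simp add: measurable_cong_sets[OF Mb refl])
  have "emeasure (iid_seq M) {x. psum x t \<le> c * real t} = (\<integral>\<^sup>+ x. indicator {x. psum x t \<le> c * real t} x \<partial>iid_seq M)"
    by (rule emeasure_psum_le_int[OF Mb])
  also have "\<dots> \<le> (\<integral>\<^sup>+ x. (\<Prod>u<t. indicator {..0::real} (x u)) \<partial>iid_seq M)"
  proof (rule nn_integral_mono_AE)
    show "AE x in iid_seq M. indicator {x. psum x t \<le> c * real t} x \<le> (\<Prod>u<t. indicator {..0::real} (x u) :: ennreal)"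
      using iid_AE[OF M nat]
    proof eventually_elim
      case (elim x)
      show ?case
      proof (cases "psum x t \<le> c * real t")
        case True
        have "x u \<le> 0" if u: "u < t" for u
        proof -
          have nn: "\<And>v. 0 \<le> x v" using elim by (metis Nats_cases of_nat_0_le_iff)
          have "x u \<le> psum x t" unfolding psum_def
            using u nn by (intro member_le_sum) auto
          then have "x u < 1" using True ct by linarith
          moreover obtain n where "x u = of_nat n" using elim by (auto elim!: Nats_cases)
          ultimately show ?thesis by simp
        qed
        then show ?thesis by (simp add: indicator_def)
      qed (simp)
    qed
  qed
  also have "\<dots> = emeasure M {..0} ^ t"
    using iid_prod_integral[OF M fm, of t] by (simp add: sets_eq_imp_space_eq[OF Mb] measurable_cong_sets[OF Mb refl] Mb)
  finally show ?thesis .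
qed

lemma first_bound:
  assumes M: "prob_space M" and Mb: "sets M = sets borel" and nn: "AE y in M. 0 \<le> y"
    and t: "1 \<le> t"
  shows "emeasure (iid_seq M) {x. psum x t \<le> a} \<le> emeasure M {..a}"
proof -
  have fm: "(\<lambda>y. indicator {..a} y :: ennreal) \<in> borel_measurable M"
    by (simp add: measurable_cong_sets[OF Mb refl])
  have "emeasure (iid_seq M) {x. psum x t \<le> a} = (\<integral>\<^sup>+ x. indicator {x. psum x t \<le> a} x \<partial>iid_seq M)"
    by (rule emeasure_psum_le_int[OF Mb])
  also have "\<dots> \<le> (\<integral>\<^sup>+ x. (\<Prod>u<1. indicator {..a} (x u)) \<partial>iid_seq M)"
  proof (rule nn_integral_mono_AE)
    show "AE x in iid_seq M. indicator {x. psum x t \<le> a} x \<le> (\<Prod>u<1. indicator {..a} (x u) :: ennreal)"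
      using iid_AE[OF M nn]
    proof eventually_elim
      case (elim x)
      have "x 0 \<le> psum x t" unfolding psum_def
        using t elim by (intro member_le_sum) auto
      then show ?case by (auto simp: indicator_def)
    qed
  qed
  also have "\<dots> = emeasure M {..a}"
    using iid_prod_integral[OF M fm, of 1] by (simp add: sets_eq_imp_space_eq[OF Mb] Mb)
  finally show ?thesis .
qed



lemma geo_bound:
  fixes x :: real assumes "0 < x" shows "1 / (1 - exp (- x)) \<le> 1 + 1 / x"
proof -
  have "1 + x \<le> exp x" by (rule exp_ge_add_one_self)
  then have "(1 + x) * exp (- x) \<le> 1" by (simp add: exp_minus field_simps)
  moreover have "exp (- x) < 1" using assms by simp
  ultimately show ?thesis using assms by (simp add: field_simps)
qed

lemma emeasure_atMost0:
  assumes M: "prob_space M" and Mb: "sets M = sets borel"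
  shows "emeasure M {..0::real} = ennreal (1 - measure M {0<..})"
proof -
  interpret prob_space M by (rule M)
  have sp: "space M = UNIV" using sets_eq_imp_space_eq[OF Mb] by simp
  have "{..0::real} = space M - {0<..}" using sp by auto
  then have "measure M {..0} = 1 - measure M {0<..}"
    using prob_compl[of "{0<..}"] Mb by simp
  then show ?thesis by (simp add: emeasure_eq_measure)
qed

lemma ET_chernoff:
  assumes M: "prob_space M" and Mb: "sets M = sets borel" and th: "0 \<le> \<theta>"
    and mg: "mgf M (- \<theta>) \<le> ennreal (exp (- (1/2) * \<theta> * \<mu>))" and c: "c \<le> \<mu> / 4"
    and pos: "0 < \<theta> * \<mu>"
  shows "(\<integral>\<^sup>+ x. stop_time c x \<partial>iid_seq M) \<le> ennreal (1 / (1 - exp (- (\<theta> * \<mu> / 4))))"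
proof -
  let ?r = "exp (- (\<theta> * \<mu> / 4))"
  have r1: "?r < 1" using pos by simp
  have "(\<integral>\<^sup>+ x. stop_time c x \<partial>iid_seq M) \<le> ennreal (suminf (\<lambda>t. ?r ^ t))"
  proof (rule ET_le[OF M Mb])
    fix t
    have e: "?r ^ Suc t = exp (- (\<theta> * \<mu> / 4) * real (Suc t))"
      by (metis exp_of_nat_mult mult.commute)
    show "emeasure (iid_seq M) {x. psum x (Suc t) \<le> c * real (Suc t)} \<le> ennreal (?r ^ Suc t)"
      unfolding e by (rule chernoff[OF M Mb th mg c])
  qed (use r1 in auto)
  also have "suminf (\<lambda>t. ?r ^ t) = 1 / (1 - ?r)" using r1 by (simp add: suminf_geometric)
  finally show ?thesis .
qed

lemma ET_B1:
  assumes M: "prob_space M" and Mb: "sets M = sets borel" and nat: "AE y in M. y \<in> \<nat>"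
    and th: "0 < \<theta>" and mg: "mgf M (- \<theta>) \<le> ennreal (exp (- (1/2) * \<theta> * \<mu>))"
    and \<eta>: "0 < \<eta>" "\<eta> \<le> 1/4" and c: "c \<le> \<eta> * \<mu>" and \<mu>: "0 < \<mu>"
    and p: "0 < measure M {0<..}"
  shows "(\<integral>\<^sup>+ x. stop_time c x \<partial>iid_seq M)
     \<le> ennreal (1 / measure M {0<..} + exp (- (\<theta> / (8 * \<eta>))) / (1 - exp (- (\<theta> * \<mu> / 8))))"
proof -
  interpret prob_space M by (rule M)
  define p where "p = measure M {0<..}"
  define K where "K = exp (- (\<theta> / (8 * \<eta>)))"
  define \<rho> where "\<rho> = exp (- (\<theta> * \<mu> / 8))"
  have p1: "p \<le> 1" unfolding p_def by simp
  have p0: "0 < p" using p unfolding p_def .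
  have \<rho>1: "\<rho> < 1" "0 < \<rho>" using th \<mu> unfolding \<rho>_def by auto
  have K0: "0 < K" unfolding K_def by simp
  have "\<eta> * \<mu> \<le> (1/4) * \<mu>" using \<eta> \<mu> by (intro mult_right_mono) auto
  then have c4: "c \<le> \<mu> / 4" using c by simp
  have sq: "(\<lambda>t. (1 - p) ^ t + K * \<rho> ^ t) sums (1 / (1 - (1 - p)) + K * (1 / (1 - \<rho>)))"
    using p0 p1 \<rho>1 by (intro sums_add sums_mult geometric_sums) auto
  have "(\<integral>\<^sup>+ x. stop_time c x \<partial>iid_seq M) \<le> ennreal (suminf (\<lambda>t. (1 - p) ^ t + K * \<rho> ^ t))"
  proof (rule ET_le[OF M Mb])
    fix t
    let ?s = "Suc t"
    show "emeasure (iid_seq M) {x. psum x ?s \<le> c * real ?s} \<le> ennreal ((1 - p) ^ ?s + K * \<rho> ^ ?s)"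
    proof (cases "c * real ?s < 1")
      case True
      have "emeasure (iid_seq M) {x. psum x ?s \<le> c * real ?s} \<le> emeasure M {..0} ^ ?s"
        by (rule zero_bound[OF M Mb nat True])
      also have "\<dots> = ennreal ((1 - p) ^ ?s)"
        using p1 unfolding emeasure_atMost0[OF M Mb] p_def by (subst ennreal_power) auto
      also have "\<dots> \<le> ennreal ((1 - p) ^ ?s + K * \<rho> ^ ?s)"
        using K0 \<rho>1 by (intro ennreal_leI) auto
      finally show ?thesis .
    next
      case False
      have "emeasure (iid_seq M) {x. psum x ?s \<le> c * real ?s} \<le> ennreal (exp (- (\<theta> * \<mu> / 4) * real ?s))"
        using th by (intro chernoff[OF M Mb _ mg c4]) simp
      also have "\<dots> \<le> ennreal (K * \<rho> ^ ?s)"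
      proof (intro ennreal_leI)
        have "1 \<le> c * real ?s" using False by simp
        also have "\<dots> \<le> \<eta> * \<mu> * real ?s" using c by (intro mult_right_mono) auto
        finally have A: "1 \<le> \<eta> * (\<mu> * real ?s)" by (simp add: mult.assoc)
        have "\<theta> * 1 \<le> \<theta> * (\<eta> * (\<mu> * real ?s))" by (rule mult_left_mono[OF A]) (use th in simp)
        then have "\<theta> / (8 * \<eta>) \<le> \<theta> * \<mu> * real ?s / 8"
          using \<eta> by (simp add: field_simps)
        have e1: "\<rho> ^ ?s = exp (real ?s * (- (\<theta> * \<mu> / 8)))"
          unfolding \<rho>_def by (rule exp_of_nat_mult[symmetric])
        have e2: "K * \<rho> ^ ?s = exp (- (\<theta> / (8 * \<eta>)) + real ?s * (- (\<theta> * \<mu> / 8)))"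
          unfolding e1 K_def by (rule exp_add[symmetric])
        define s where "s = real ?s"
        have "- (\<theta> * \<mu> / 4) * s \<le> - (\<theta> / (8 * \<eta>)) + s * (- (\<theta> * \<mu> / 8))"
          using \<open>\<theta> / (8 * \<eta>) \<le> \<theta> * \<mu> * real ?s / 8\<close> unfolding s_def[symmetric] by (simp add: algebra_simps)
        then show "exp (- (\<theta> * \<mu> / 4) * real ?s) \<le> K * \<rho> ^ ?s"
          unfolding e2 s_def by simp
      qed
      also have "\<dots> \<le> ennreal ((1 - p) ^ ?s + K * \<rho> ^ ?s)"
        using p1 by (intro ennreal_leI) auto
      finally show ?thesis .
    qed
  qed (use p1 K0 \<rho>1 sq in \<open>auto simp: sums_iff\<close>)
  also have "suminf (\<lambda>t. (1 - p) ^ t + K * \<rho> ^ t) = 1 / p + K / (1 - \<rho>)"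
    using sq by (simp add: sums_iff)
  finally show ?thesis unfolding p_def K_def \<rho>_def .
qed

lemma aux_lin:
  fixes \<tau> a b :: real assumes "\<tau> * a \<le> \<tau> * b"
  shows "- (\<tau> / 4) * b \<le> (a + b) * (- (\<tau> / 8))"
proof -
  have "(a + b) * (- (\<tau> / 8)) = - (\<tau> * a) / 8 - (\<tau> * b) / 8" by (simp add: algebra_simps)
  moreover have "- (\<tau> / 4) * b = - (\<tau> * b) / 4" by simp
  ultimately show ?thesis using assms by linarith
qed

lemma ET_B2:
  assumes M: "prob_space M" and Mb: "sets M = sets borel" and nn: "AE y in M. 0 \<le> y"
    and th: "0 \<le> \<theta>" and mg: "mgf M (- \<theta>) \<le> ennreal (exp (- (1/2) * \<theta> * \<mu>))"
    and \<tau>: "\<theta> * \<mu> = \<tau>" "0 < \<tau>"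
    and \<eta>: "0 < \<eta>" "\<eta> \<le> 1/4" and c: "c \<le> \<eta> * \<mu>" and \<mu>: "0 < \<mu>"
    and e1: "\<And>t. 1 \<le> t \<Longrightarrow> t \<le> N \<Longrightarrow> measure M {..real t * \<eta> * \<mu>} \<le> e1" and e10: "0 \<le> e1"
  shows "(\<integral>\<^sup>+ x. stop_time c x \<partial>iid_seq M)
     \<le> ennreal (1 + (real N + 1) * e1 + exp (- (\<tau> / 8)) ^ (N + 1) / (1 - exp (- (\<tau> / 8))))"
proof -
  interpret prob_space M by (rule M)
  define r where "r = exp (- (\<tau> / 8))"
  have r1: "r < 1" "0 < r" using \<tau> unfolding r_def by auto
  have "\<eta> * \<mu> \<le> (1/4) * \<mu>" using \<eta> \<mu> by (intro mult_right_mono) auto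
  then have c4: "c \<le> \<mu> / 4" using c by simp
  define q where "q t = (if t = 0 then 1 else 0) + ((if t \<in> {..N} then e1 else 0) + r ^ (N + 1) * r ^ t)" for t
  have sq: "q sums (1 + ((\<Sum>t\<in>{..N}. e1) + r ^ (N + 1) * (1 / (1 - r))))"
    unfolding q_def using r1 by (intro sums_add sums_single[where f="\<lambda>_. 1"] sums_If_finite_set sums_mult geometric_sums) auto
  have "(\<integral>\<^sup>+ x. stop_time c x \<partial>iid_seq M) \<le> ennreal (suminf q)"
  proof (rule ET_le[OF M Mb])
    fix t
    let ?s = "Suc t"
    show "emeasure (iid_seq M) {x. psum x ?s \<le> c * real ?s} \<le> ennreal (q ?s)"
    proof (cases "?s \<le> N")
      case True
      have "emeasure (iid_seq M) {x. psum x ?s \<le> c * real ?s} \<le> emeasure M {..c * real ?s}"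
        by (rule first_bound[OF M Mb nn]) simp
      also have "\<dots> \<le> emeasure M {..real ?s * \<eta> * \<mu>}"
      proof (rule emeasure_mono)
        have "c * real ?s \<le> \<eta> * \<mu> * real ?s" using c by (intro mult_right_mono) auto
        then show "{..c * real ?s} \<subseteq> {..real ?s * \<eta> * \<mu>}" by (auto simp: algebra_simps)
      qed (simp add: Mb)
      also have "\<dots> = ennreal (measure M {..real ?s * \<eta> * \<mu>})" by (simp add: emeasure_eq_measure)
      also have "\<dots> \<le> ennreal (q ?s)"
      proof (intro ennreal_leI)
        have rp: "0 \<le> r ^ (N + 1) * r ^ ?s" using r1 by simp
        have "q ?s = e1 + r ^ (N + 1) * r ^ ?s" unfolding q_def using True by simp
        then show "measure M {..real ?s * \<eta> * \<mu>} \<le> q ?s" using e1[of ?s] True rp by linarith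
      qed
      finally show ?thesis .
    next
      case False
      have "emeasure (iid_seq M) {x. psum x ?s \<le> c * real ?s} \<le> ennreal (exp (- (\<theta> * \<mu> / 4) * real ?s))"
        by (rule chernoff[OF M Mb th mg c4])
      also have "\<dots> \<le> ennreal (r ^ (N + 1) * r ^ ?s)"
      proof (intro ennreal_leI)
        have e: "r ^ (N + 1) * r ^ ?s = exp (real (N + 1 + ?s) * (- (\<tau> / 8)))"
          unfolding r_def power_add[symmetric] by (rule exp_of_nat_mult[symmetric])
        have "real (N + 1) \<le> real ?s" using False by simp
        then have "\<tau> * real (N + 1) \<le> \<tau> * real ?s" using \<tau> by (intro mult_left_mono) auto
        then have "- (\<tau> / 4) * real ?s \<le> real (N + 1 + ?s) * (- (\<tau> / 8))"
          unfolding of_nat_add[of "N+1" ?s] by (rule aux_lin)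
        then show "exp (- (\<theta> * \<mu> / 4) * real ?s) \<le> r ^ (N + 1) * r ^ ?s"
          unfolding e \<tau>(1) by simp
      qed
      also have "\<dots> \<le> ennreal (q ?s)"
        unfolding q_def using e10 by (intro ennreal_leI) auto
      finally show ?thesis .
    qed
  qed (use e10 r1 sq in \<open>auto simp: sums_iff q_def\<close>)
  also have "suminf q = 1 + (real N + 1) * e1 + r ^ (N + 1) / (1 - r)"
    using sq by (simp add: sums_iff)
  finally show ?thesis unfolding r_def .
qed



lemma nn_integral_add_le:
  assumes f[measurable]: "f \<in> borel_measurable M"
  shows "(\<integral>\<^sup>+x. f x + h x \<partial>M) \<le> integral\<^sup>N M f + integral\<^sup>N M h"
  unfolding nn_integral_def_finite[of M "\<lambda>x. f x + h x"]
proof (rule SUP_least, clarify)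
  fix s assume s: "simple_function M s" "s \<le> (\<lambda>x. f x + h x)" "\<forall>x. s x < top"
  have sm[measurable]: "s \<in> borel_measurable M" using s(1) by (rule borel_measurable_simple_function)
  have "integral\<^sup>S M s = (\<integral>\<^sup>+x. s x \<partial>M)" using s(1) by (rule nn_integral_eq_simple_integral[symmetric])
  also have "\<dots> \<le> (\<integral>\<^sup>+x. f x + (s x - f x) \<partial>M)"
  proof (rule nn_integral_mono)
    fix x show "s x \<le> f x + (s x - f x)"
      by (metis add.commute diff_add_self_ennreal nle_le)
  qed
  also have "\<dots> = integral\<^sup>N M f + (\<integral>\<^sup>+x. s x - f x \<partial>M)"
    by (rule nn_integral_add) measurable
  also have "\<dots> \<le> integral\<^sup>N M f + integral\<^sup>N M h"
  proof (intro add_left_mono nn_integral_mono)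
    fix x
    have "s x \<le> f x + h x" using s(2) by (auto simp: le_fun_def)
    then show "s x - f x \<le> h x"
      using s(3)[rule_format, of x] by (auto simp: ennreal_minus_le_iff add.commute)
  qed
  finally show "integral\<^sup>S M s \<le> integral\<^sup>N M f + integral\<^sup>N M h" .
qed

lemma integ:
  fixes g cmp :: "real \<Rightarrow> real" and ET :: "real \<Rightarrow> ennreal"
  assumes gm: "g \<in> borel_measurable lborel" and gnn: "\<forall>\<mu>>0. 0 \<le> g \<mu>"
    and gd: "(\<integral>\<^sup>+ \<mu>\<in>{0<..}. ennreal (g \<mu>) \<partial>lborel) = 1"
    and lamd: "(\<integral>\<^sup>+ \<mu>\<in>{0<..}. ennreal (cmp \<mu> * g \<mu>) \<partial>lborel) = ennreal lam"
    and lam: "0 \<le> lam" and d: "0 < d" and K: "0 \<le> K"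
    and le: "\<And>\<mu>. d \<le> \<mu> \<Longrightarrow> \<mu> \<le> cmp \<mu>"
    and bnd: "\<And>\<mu>. d \<le> \<mu> \<Longrightarrow> ennreal (g \<mu> * \<mu>) * ET \<mu> \<le> ennreal (cmp \<mu> * g \<mu>) + ennreal (K * (g \<mu> * \<mu> + g \<mu>))"
  shows "(\<integral>\<^sup>+ \<mu>. ennreal (g \<mu> * \<mu>) * ET \<mu> * indicator {d..} \<mu> \<partial>lborel) \<le> ennreal (lam + K * (lam + 1))"
proof -
  have gm'[measurable]: "g \<in> borel_measurable borel" using gm by simp
  have m1: "(\<lambda>\<mu>. ennreal (g \<mu> * \<mu>) * indicator {d..} \<mu>) \<in> borel_measurable lborel"
    unfolding measurable_lborel2 by measurable
  have m2: "(\<lambda>\<mu>. ennreal (g \<mu>) * indicator {d..} \<mu>) \<in> borel_measurable lborel"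
    unfolding measurable_lborel2 by measurable
  have I1: "(\<integral>\<^sup>+ \<mu>. ennreal (g \<mu> * \<mu>) * indicator {d..} \<mu> \<partial>lborel) \<le> ennreal lam"
  proof -
    have "(\<integral>\<^sup>+ \<mu>. ennreal (g \<mu> * \<mu>) * indicator {d..} \<mu> \<partial>lborel) \<le> (\<integral>\<^sup>+ \<mu>. ennreal (cmp \<mu> * g \<mu>) * indicator {0<..} \<mu> \<partial>lborel)"
    proof (rule nn_integral_mono)
      fix \<mu> :: real
      show "ennreal (g \<mu> * \<mu>) * indicator {d..} \<mu> \<le> ennreal (cmp \<mu> * g \<mu>) * indicator {0<..} \<mu>"
      proof (cases "d \<le> \<mu>")
        case True
        then have pos: "0 < \<mu>" "0 \<le> g \<mu>" using d gnn by auto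
        have "g \<mu> * \<mu> \<le> cmp \<mu> * g \<mu>" using mult_right_mono[OF le[OF True] pos(2)] by (simp add: mult.commute)
        then show ?thesis using True pos by (auto intro: ennreal_leI)
      qed simp
    qed
    then show ?thesis using lamd by simp
  qed
  have I2: "(\<integral>\<^sup>+ \<mu>. ennreal (g \<mu>) * indicator {d..} \<mu> \<partial>lborel) \<le> 1"
  proof -
    have "(\<integral>\<^sup>+ \<mu>. ennreal (g \<mu>) * indicator {d..} \<mu> \<partial>lborel) \<le> (\<integral>\<^sup>+ \<mu>. ennreal (g \<mu>) * indicator {0<..} \<mu> \<partial>lborel)"
      using d by (intro nn_integral_mono) (auto simp: indicator_def)
    then show ?thesis using gd by simp
  qed
  have "(\<integral>\<^sup>+ \<mu>. ennreal (g \<mu> * \<mu>) * ET \<mu> * indicator {d..} \<mu> \<partial>lborel)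
     \<le> (\<integral>\<^sup>+ \<mu>. ennreal K * (ennreal (g \<mu> * \<mu>) * indicator {d..} \<mu> + ennreal (g \<mu>) * indicator {d..} \<mu>)
            + ennreal (cmp \<mu> * g \<mu>) * indicator {0<..} \<mu> \<partial>lborel)"
  proof (rule nn_integral_mono)
    fix \<mu> :: real
    show "ennreal (g \<mu> * \<mu>) * ET \<mu> * indicator {d..} \<mu>
      \<le> ennreal K * (ennreal (g \<mu> * \<mu>) * indicator {d..} \<mu> + ennreal (g \<mu>) * indicator {d..} \<mu>)
            + ennreal (cmp \<mu> * g \<mu>) * indicator {0<..} \<mu>"
    proof (cases "d \<le> \<mu>")
      case True
      then have pos: "0 < \<mu>" "0 \<le> g \<mu>" using d gnn by auto
      have "ennreal (K * (g \<mu> * \<mu> + g \<mu>)) = ennreal K * (ennreal (g \<mu> * \<mu>) + ennreal (g \<mu>))"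
        using pos K by (simp add: ennreal_mult ennreal_plus)
      then show ?thesis using bnd[OF True] True pos by (simp add: add.commute)
    qed simp
  qed
  also have "\<dots> \<le> (\<integral>\<^sup>+ \<mu>. ennreal K * (ennreal (g \<mu> * \<mu>) * indicator {d..} \<mu> + ennreal (g \<mu>) * indicator {d..} \<mu>) \<partial>lborel)
      + (\<integral>\<^sup>+ \<mu>. ennreal (cmp \<mu> * g \<mu>) * indicator {0<..} \<mu> \<partial>lborel)"
    by (rule nn_integral_add_le) (intro borel_measurable_times_ennreal borel_measurable_add m1 m2 borel_measurable_const)
  also have "(\<integral>\<^sup>+ \<mu>. ennreal (cmp \<mu> * g \<mu>) * indicator {0<..} \<mu> \<partial>lborel) = ennreal lam"
    using lamd by simp
  also have "(\<integral>\<^sup>+ \<mu>. ennreal K * (ennreal (g \<mu> * \<mu>) * indicator {d..} \<mu> + ennreal (g \<mu>) * indicator {d..} \<mu>) \<partial>lborel)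
      = ennreal K * ((\<integral>\<^sup>+ \<mu>. ennreal (g \<mu> * \<mu>) * indicator {d..} \<mu> \<partial>lborel) + (\<integral>\<^sup>+ \<mu>. ennreal (g \<mu>) * indicator {d..} \<mu> \<partial>lborel))"
    using m1 m2 by (simp add: nn_integral_cmult nn_integral_add)
  also have "\<dots> \<le> ennreal K * (ennreal lam + 1)"
    by (intro mult_left_mono add_mono I1 I2) auto
  finally have X: "(\<integral>\<^sup>+ \<mu>. ennreal (g \<mu> * \<mu>) * ET \<mu> * indicator {d..} \<mu> \<partial>lborel) \<le> ennreal K * (ennreal lam + 1) + ennreal lam"
    by (auto intro: add_right_mono)
  have "ennreal K * (ennreal lam + 1) + ennreal lam = ennreal (lam + K * (lam + 1))"
    using lam K by (simp add: ennreal_mult ennreal_plus add.commute)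
  with X show ?thesis by simp
qed



lemma c_small:
  fixes b \<zeta> :: "nat \<Rightarrow> real"
  assumes b_small: "\<forall>\<delta>>0. b \<in> o(\<lambda>n. real n powr \<delta>)"
    and z: "\<zeta> \<sim>[sequentially] (\<lambda>n. C0 * real n powr (- 1 / (\<beta> + 1)))"
    and \<beta>: "\<beta> > 0" and \<omega>: "0 < \<omega>" "\<omega> < 1 / (\<beta> + 1)" and \<eta>: "0 < \<eta>"
  shows "\<forall>\<^sub>F n in sequentially. b n * \<zeta> n \<le> \<eta> * real n powr (- \<omega>)"
proof -
  define e where "e = 1 / (\<beta> + 1)"
  define \<delta>0 where "\<delta>0 = (e - \<omega>) / 2"
  have \<delta>0: "0 < \<delta>0" using \<omega> unfolding \<delta>0_def e_def by simp
  have "\<omega> < e" using \<omega> unfolding e_def by simp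
  then have dle: "\<delta>0 - e \<le> - \<omega>" unfolding \<delta>0_def by (simp add: field_simps)
  have m1: "- 1 / (\<beta> + 1) = - e" unfolding e_def by simp
  have hz1: "\<zeta> \<in> O(\<lambda>n. C0 * real n powr (- e))"
    using asymp_equiv_imp_bigo[OF z] unfolding m1 .
  have hz2: "(\<lambda>n. C0 * real n powr (- e)) \<in> O(\<lambda>n. real n powr (- e))"
    by (intro bigoI[where c="\<bar>C0\<bar>"]) (auto simp: abs_mult)
  have hz: "\<zeta> \<in> O(\<lambda>n. real n powr (- e))" by (rule landau_o.big_trans[OF hz1 hz2])
  have hb: "b \<in> o(\<lambda>n. real n powr \<delta>0)" using b_small \<delta>0 by blast
  have h1: "(\<lambda>n. b n * \<zeta> n) \<in> o(\<lambda>n. real n powr \<delta>0 * real n powr (- e))"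
    by (rule landau_o.small_big_mult[OF hb hz])
  have h2: "(\<lambda>n. real n powr \<delta>0 * real n powr (- e)) \<in> O(\<lambda>n. real n powr (- \<omega>))"
  proof (intro bigoI[where c=1])
    show "\<forall>\<^sub>F n in sequentially. norm (real n powr \<delta>0 * real n powr (- e)) \<le> 1 * norm (real n powr (- \<omega>))"
      using eventually_ge_at_top[of "1::nat"]
    proof eventually_elim
      case (elim n)
      have "real n powr \<delta>0 * real n powr (- e) = real n powr (\<delta>0 - e)"
        by (simp add: powr_add[symmetric])
      also have "\<dots> \<le> real n powr (- \<omega>)"
        using elim dle by (intro powr_mono) auto
      finally show ?case by simp
    qed
  qed
  have "(\<lambda>n. b n * \<zeta> n) \<in> o(\<lambda>n. real n powr (- \<omega>))" by (rule landau_o.small_big_trans[OF h1 h2])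
  from landau_o.smallD[OF this \<eta>] show ?thesis
    by eventually_elim simp
qed


lemma claim1_real:
  fixes \<theta> \<mu> :: real assumes "0 < \<theta>" "0 < \<mu>"
  shows "min \<mu> 1 * (1 / (1 - exp (- (\<theta> * \<mu> / 4)))) \<le> 1 + 4 / \<theta>"
proof -
  have x: "0 < \<theta> * \<mu> / 4" using assms by simp
  have g: "1 / (1 - exp (- (\<theta> * \<mu> / 4))) \<le> 1 + 4 / (\<theta> * \<mu>)"
    using geo_bound[OF x] by simp
  have m0: "0 \<le> min \<mu> 1" using assms by simp
  have "min \<mu> 1 * (1 / (1 - exp (- (\<theta> * \<mu> / 4)))) \<le> min \<mu> 1 * (1 + 4 / (\<theta> * \<mu>))"
    by (rule mult_left_mono[OF g m0])
  also have "\<dots> = min \<mu> 1 + 4 / \<theta> * (min \<mu> 1 / \<mu>)" using assms by (simp add: field_simps)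
  also have "\<dots> \<le> 1 + 4 / \<theta> * 1"
    using assms by (intro add_mono mult_left_mono) (auto simp: field_simps)
  finally show ?thesis by simp
qed


lemma B1_real:
  fixes g \<mu> p \<theta> K :: real
  assumes "0 \<le> g" "0 < \<mu>" "0 < p" "0 < \<theta>" "0 \<le> K"
  shows "g * \<mu> * (1 / p + K / (1 - exp (- (\<theta> * \<mu> / 8)))) \<le> (\<mu> / p) * g + K * (1 + 8 / \<theta>) * (g * \<mu> + g)"
proof -
  have x: "0 < \<theta> * \<mu> / 8" using assms by simp
  have e1: "exp (- (\<theta> * \<mu> / 8)) < 1" using x by simp
  have gb: "1 / (1 - exp (- (\<theta> * \<mu> / 8))) \<le> 1 + 8 / (\<theta> * \<mu>)"
    using geo_bound[OF x] by simp
  have "\<mu> * (1 / (1 - exp (- (\<theta> * \<mu> / 8)))) \<le> \<mu> * (1 + 8 / (\<theta> * \<mu>))"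
    using gb assms by (intro mult_left_mono) auto
  also have "\<dots> = \<mu> + 8 / \<theta>" using assms by (simp add: field_simps)
  also have "\<dots> \<le> (1 + 8 / \<theta>) * (\<mu> + 1)" using assms by (simp add: field_simps)
  finally have A: "\<mu> / (1 - exp (- (\<theta> * \<mu> / 8))) \<le> (1 + 8 / \<theta>) * (\<mu> + 1)" by simp
  have "g * \<mu> * (1 / p + K / (1 - exp (- (\<theta> * \<mu> / 8))))
      = (\<mu> / p) * g + (K * g) * (\<mu> / (1 - exp (- (\<theta> * \<mu> / 8))))"
    by (simp add: field_simps)
  also have "\<dots> \<le> (\<mu> / p) * g + (K * g) * ((1 + 8 / \<theta>) * (\<mu> + 1))"
    using A assms by (intro add_left_mono mult_left_mono) auto
  also have "\<dots> = (\<mu> / p) * g + K * (1 + 8 / \<theta>) * (g * \<mu> + g)" by (simp add: algebra_simps)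
  finally show ?thesis .
qed


lemma cmp_ge:
  assumes M: "prob_space M" and Mb: "sets M = sets borel" and nn: "AE x in M. 0 \<le> x"
    and int: "integrable M (\<lambda>x. x)" and mean: "(\<integral> x. x \<partial>M) = \<mu>" and p: "0 < measure M {0<..}"
  shows "cond_mean_pos M = \<mu> / measure M {0<..}"
proof -
  have m1: "(\<lambda>x::real. x * indicator {0<..} x) \<in> borel_measurable M"
    unfolding measurable_cong_sets[OF Mb refl] by measurable
  have m2: "(\<lambda>x::real. x) \<in> borel_measurable M"
    unfolding measurable_cong_sets[OF Mb refl] by measurable
  have "(\<integral> x. x * indicator {0<..} x \<partial>M) = (\<integral> x. x \<partial>M)"
    by (rule integral_cong_AE[OF m1 m2]) (use nn in \<open>eventually_elim, auto simp: indicator_def\<close>)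
  then show ?thesis unfolding cond_mean_pos_def using mean by simp
qed




lemma exp_neg_le_inv: fixes x :: real assumes "0 < x" shows "exp (- x) \<le> 1 / x"
proof -
  have "x \<le> exp x" using exp_ge_add_one_self[of x] by linarith
  then show ?thesis using assms by (simp add: exp_minus field_simps)
qed

theorem lemma5:
  fixes g :: "real \<Rightarrow> real" and F :: "real \<Rightarrow> real measure"
    and lam \<alpha> \<beta> \<omega> :: real and b \<zeta> :: "nat \<Rightarrow> real"
  assumes g_meas: "g \<in> borel_measurable lborel"
    and g_nonneg: "\<forall>\<mu>>0. 0 \<le> g \<mu>"
    and g_density: "(\<integral>\<^sup>+ \<mu>\<in>{0<..}. ennreal (g \<mu>) \<partial>lborel) = 1"
    and F_prob: "\<forall>\<mu>>0. prob_space (F \<mu>)"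
    and F_sets: "\<forall>\<mu>>0. sets (F \<mu>) = sets borel"
    and F_nonneg: "\<forall>\<mu>>0. AE x in F \<mu>. 0 \<le> x"
    and F_mean: "\<forall>\<mu>>0. integrable (F \<mu>) (\<lambda>x. x) \<and> (\<integral> x. x \<partial>F \<mu>) = \<mu>"
    and lam_nonneg: "0 \<le> lam"
    and lam_def: "(\<integral>\<^sup>+ \<mu>\<in>{0<..}. ennreal (cond_mean_pos (F \<mu>) * g \<mu>) \<partial>lborel) = ennreal lam"
    and A1: "\<alpha> > 0" "\<beta> > 0" "g \<sim>[at_right 0] (\<lambda>\<mu>. \<alpha> * \<mu> powr (\<beta> - 1))"
    and A2: "\<exists>a1>0. \<forall>\<mu>>0. a1 * min \<mu> 1 \<le> measure (F \<mu>) {0<..}"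
    and B: "cond_B1 F \<or> cond_B2 F"
    and b_inf: "filterlim b at_top sequentially"
    and b_small: "\<forall>\<delta>>0. b \<in> o(\<lambda>n. real n powr \<delta>)"
    and \<zeta>_asymp: "\<zeta> \<sim>[sequentially]
       (\<lambda>n. ((lam * \<beta> * (\<beta> + 1)) / \<alpha>) powr (1 / (\<beta> + 1)) * real n powr (- 1 / (\<beta> + 1)))"
    and \<omega>: "0 < \<omega>" "\<omega> < 1 / (\<beta> + 1)"
  shows "(\<exists>K::real. \<forall>\<^sub>F n in sequentially. \<forall>\<mu>. real n powr (- \<omega>) \<le> \<mu> \<longrightarrow>
            ennreal (min \<mu> 1) * (\<integral>\<^sup>+ x. stop_time (b n * \<zeta> n) x \<partial>iid_seq (F \<mu>)) \<le> ennreal K)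
      \<and> (\<forall>\<epsilon>>0. \<forall>\<^sub>F n in sequentially.
            (\<integral>\<^sup>+ \<mu>. ennreal (g \<mu> * \<mu>) * (\<integral>\<^sup>+ x. stop_time (b n * \<zeta> n) x \<partial>iid_seq (F \<mu>))
                     * indicator {real n powr (- \<omega>)..} \<mu> \<partial>lborel) \<le> ennreal (lam + \<epsilon>))"
proof -
  have Fp: "\<And>\<mu>. 0 < \<mu> \<Longrightarrow> prob_space (F \<mu>)" using F_prob by auto
  have Fs: "\<And>\<mu>. 0 < \<mu> \<Longrightarrow> sets (F \<mu>) = sets borel" using F_sets by auto
  have Fnn: "\<And>\<mu>. 0 < \<mu> \<Longrightarrow> AE x in F \<mu>. 0 \<le> x" using F_nonneg by auto
  obtain a1 where a1: "a1 > 0" "\<forall>\<mu>>0. a1 * min \<mu> 1 \<le> measure (F \<mu>) {0<..}" using A2 by auto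
  have pp: "0 < measure (F \<mu>) {0<..}" if "0 < \<mu>" for \<mu>
  proof -
    have "0 < a1 * min \<mu> 1" using a1 that by simp
    moreover have "a1 * min \<mu> 1 \<le> measure (F \<mu>) {0<..}" using a1(2) that by blast
    ultimately show ?thesis by linarith
  qed
  have p1: "measure (F \<mu>) {0<..} \<le> 1" if "0 < \<mu>" for \<mu>
    using prob_space.prob_le_1[OF Fp[OF that]] .
  have p1': "measure (F \<mu>) A \<le> 1" if "0 < \<mu>" for \<mu> A
    using prob_space.prob_le_1[OF Fp[OF that]] .
  have cmp: "cond_mean_pos (F \<mu>) = \<mu> / measure (F \<mu>) {0<..}" if "0 < \<mu>" for \<mu>
    using F_mean that by (intro cmp_ge[OF Fp[OF that] Fs[OF that] Fnn[OF that] _ _ pp[OF that]]) auto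
  have cmpge: "\<mu> \<le> cond_mean_pos (F \<mu>)" if "0 < \<mu>" for \<mu>
  proof -
    have "\<mu> * 1 \<le> \<mu> * (1 / measure (F \<mu>) {0<..})"
      using that pp[OF that] p1[OF that] by (intro mult_left_mono) auto
    then show ?thesis using cmp[OF that] by simp
  qed
  have ev: "\<forall>\<^sub>F n in sequentially. b n * \<zeta> n \<le> \<eta> * real n powr (- \<omega>) \<and> 1 \<le> n" if "0 < \<eta>" for \<eta>
    using c_small[OF b_small \<zeta>_asymp A1(2) \<omega>(1) \<omega>(2) that] eventually_ge_at_top[of "1::nat"]
    by eventually_elim auto
  have dpos: "0 < real n powr (- \<omega>)" if "1 \<le> n" for n using that by simp
  have q14: "(0::real) < 1/4" by simp
  have half: "(0::real) < 1/2 \<and> (1/2::real) \<le> 1" by simp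
  from B show ?thesis
  proof
    assume B1: "cond_B1 F"
    then have nat: "\<forall>\<mu>>0. AE x in F \<mu>. x \<in> \<nat>"
      and mgfB: "\<forall>\<delta>. 0 < \<delta> \<and> \<delta> \<le> 1 \<longrightarrow> (\<exists>\<theta>\<delta>>0. \<forall>\<mu>>0. \<forall>\<theta>. 0 \<le> \<theta> \<and> \<theta> \<le> \<theta>\<delta> \<longrightarrow>
        mgf (F \<mu>) \<theta> \<le> ennreal (exp ((1 + \<delta>) * \<theta> * \<mu>)) \<and>
        mgf (F \<mu>) (- \<theta>) \<le> ennreal (exp (- (1 - \<delta>) * \<theta> * \<mu>)))"
      unfolding cond_B1_def by auto
    from mp[OF spec[OF mgfB, of "1/2"] half] obtain \<theta>d where \<theta>d: "\<theta>d > 0"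
      and h\<theta>: "\<forall>\<mu>>0. \<forall>\<theta>. 0 \<le> \<theta> \<and> \<theta> \<le> \<theta>d \<longrightarrow>
        mgf (F \<mu>) \<theta> \<le> ennreal (exp ((1 + 1/2) * \<theta> * \<mu>)) \<and>
        mgf (F \<mu>) (- \<theta>) \<le> ennreal (exp (- (1 - 1/2) * \<theta> * \<mu>))" by blast
    have mg: "mgf (F \<mu>) (- \<theta>d) \<le> ennreal (exp (- (1/2) * \<theta>d * \<mu>))" if "0 < \<mu>" for \<mu>
      using h\<theta> that \<theta>d by auto
    show ?thesis
    proof
      show "\<exists>K::real. \<forall>\<^sub>F n in sequentially. \<forall>\<mu>. real n powr (- \<omega>) \<le> \<mu> \<longrightarrow>
            ennreal (min \<mu> 1) * (\<integral>\<^sup>+ x. stop_time (b n * \<zeta> n) x \<partial>iid_seq (F \<mu>)) \<le> ennreal K"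
      proof (intro exI)
        show "\<forall>\<^sub>F n in sequentially. \<forall>\<mu>. real n powr (- \<omega>) \<le> \<mu> \<longrightarrow>
            ennreal (min \<mu> 1) * (\<integral>\<^sup>+ x. stop_time (b n * \<zeta> n) x \<partial>iid_seq (F \<mu>)) \<le> ennreal (1 + 4 / \<theta>d)"
          using ev[OF q14]
        proof eventually_elim
          case (elim n)
          show ?case
          proof (intro allI impI)
            fix \<mu> assume d: "real n powr (- \<omega>) \<le> \<mu>"
            have \<mu>: "0 < \<mu>" using dpos[of n] elim d by linarith
            have c: "b n * \<zeta> n \<le> \<mu> / 4" using elim d by linarith
            have "(\<integral>\<^sup>+ x. stop_time (b n * \<zeta> n) x \<partial>iid_seq (F \<mu>)) \<le> ennreal (1 / (1 - exp (- (\<theta>d * \<mu> / 4))))"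
              using \<theta>d \<mu> by (intro ET_chernoff[OF Fp[OF \<mu>] Fs[OF \<mu>] _ mg[OF \<mu>] c]) auto
            then have "ennreal (min \<mu> 1) * (\<integral>\<^sup>+ x. stop_time (b n * \<zeta> n) x \<partial>iid_seq (F \<mu>))
                \<le> ennreal (min \<mu> 1) * ennreal (1 / (1 - exp (- (\<theta>d * \<mu> / 4))))"
              by (rule mult_left_mono) simp
            also have "\<dots> = ennreal (min \<mu> 1 * (1 / (1 - exp (- (\<theta>d * \<mu> / 4)))))"
            proof -
              have "exp (- (\<theta>d * \<mu> / 4)) < 1" using \<theta>d \<mu> by simp
              then show ?thesis using \<mu> by (intro ennreal_mult[symmetric]) auto
            qed
            also have "\<dots> \<le> ennreal (1 + 4 / \<theta>d)"
              by (intro ennreal_leI claim1_real \<theta>d \<mu>)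
            finally show "ennreal (min \<mu> 1) * (\<integral>\<^sup>+ x. stop_time (b n * \<zeta> n) x \<partial>iid_seq (F \<mu>)) \<le> ennreal (1 + 4 / \<theta>d)" .
          qed
        qed
      qed
    next
      show "\<forall>\<epsilon>>0. \<forall>\<^sub>F n in sequentially.
            (\<integral>\<^sup>+ \<mu>. ennreal (g \<mu> * \<mu>) * (\<integral>\<^sup>+ x. stop_time (b n * \<zeta> n) x \<partial>iid_seq (F \<mu>))
                     * indicator {real n powr (- \<omega>)..} \<mu> \<partial>lborel) \<le> ennreal (lam + \<epsilon>)"
      proof (intro allI impI)
        fix \<epsilon> :: real assume \<epsilon>: "0 < \<epsilon>"
        define L where "L = 1 + 8 / \<theta>d"
        have L: "1 \<le> L" using \<theta>d unfolding L_def by simp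
        define \<eta> where "\<eta> = min (1/4) (\<theta>d * \<epsilon> / (8 * L * (lam + 1)))"
        have \<eta>0: "0 < \<eta>" "\<eta> \<le> 1/4" using \<theta>d \<epsilon> L lam_nonneg unfolding \<eta>_def by auto
        define K where "K = exp (- (\<theta>d / (8 * \<eta>)))"
        have K0: "0 \<le> K" unfolding K_def by simp
        have "K \<le> 1 / (\<theta>d / (8 * \<eta>))" unfolding K_def using \<theta>d \<eta>0 by (intro exp_neg_le_inv) simp
        then have Kle: "K \<le> 8 * \<eta> / \<theta>d" by simp
        have "K * L * (lam + 1) \<le> (8 * \<eta> / \<theta>d) * L * (lam + 1)"
          using Kle L lam_nonneg by (intro mult_right_mono) auto
        also have "\<dots> \<le> \<epsilon>"
        proof -
          have h\<eta>: "\<eta> \<le> \<theta>d * \<epsilon> / (8 * L * (lam + 1))" unfolding \<eta>_def by simp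
          have den: "0 < 8 * L * (lam + 1)" using L lam_nonneg by simp
          have e: "\<eta> * (8 * L * (lam + 1)) \<le> \<theta>d * \<epsilon>" using h\<eta> den by (simp add: pos_le_divide_eq)
          have "(8 * \<eta> / \<theta>d) * L * (lam + 1) = \<eta> * (8 * L * (lam + 1)) / \<theta>d" by simp
          also have "\<dots> \<le> \<theta>d * \<epsilon> / \<theta>d" using e \<theta>d by (intro divide_right_mono) auto
          also have "\<dots> = \<epsilon>" using \<theta>d by simp
          finally show ?thesis .
        qed
        finally have KL: "K * L * (lam + 1) \<le> \<epsilon>" .
        show "\<forall>\<^sub>F n in sequentially.
            (\<integral>\<^sup>+ \<mu>. ennreal (g \<mu> * \<mu>) * (\<integral>\<^sup>+ x. stop_time (b n * \<zeta> n) x \<partial>iid_seq (F \<mu>))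
                     * indicator {real n powr (- \<omega>)..} \<mu> \<partial>lborel) \<le> ennreal (lam + \<epsilon>)"
          using ev[OF \<eta>0(1)]
        proof eventually_elim
          case (elim n)
          let ?d = "real n powr (- \<omega>)"
          have "(\<integral>\<^sup>+ \<mu>. ennreal (g \<mu> * \<mu>) * (\<integral>\<^sup>+ x. stop_time (b n * \<zeta> n) x \<partial>iid_seq (F \<mu>))
                     * indicator {?d..} \<mu> \<partial>lborel) \<le> ennreal (lam + (K * L) * (lam + 1))"
          proof (rule integ[OF g_meas g_nonneg g_density lam_def lam_nonneg dpos[OF conjunct2[OF elim]]])
            show "0 \<le> K * L" using K0 L by simp
          next
            fix \<mu> assume d: "?d \<le> \<mu>"
            have \<mu>: "0 < \<mu>" using dpos[of n] elim d by linarith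
            show "\<mu> \<le> cond_mean_pos (F \<mu>)" by (rule cmpge[OF \<mu>])
            have "\<eta> * ?d \<le> \<eta> * \<mu>" using d \<eta>0 by (intro mult_left_mono) auto
            then have c: "b n * \<zeta> n \<le> \<eta> * \<mu>" using elim by linarith
            have g0: "0 \<le> g \<mu>" using g_nonneg \<mu> by auto
            have ET: "(\<integral>\<^sup>+ x. stop_time (b n * \<zeta> n) x \<partial>iid_seq (F \<mu>))
               \<le> ennreal (1 / measure (F \<mu>) {0<..} + K / (1 - exp (- (\<theta>d * \<mu> / 8))))"
              unfolding K_def using nat \<mu>
              by (intro ET_B1[OF Fp[OF \<mu>] Fs[OF \<mu>] _ \<theta>d mg[OF \<mu>] \<eta>0 c \<mu> pp[OF \<mu>]]) auto
            have "ennreal (g \<mu> * \<mu>) * (\<integral>\<^sup>+ x. stop_time (b n * \<zeta> n) x \<partial>iid_seq (F \<mu>))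
                \<le> ennreal (g \<mu> * \<mu>) * ennreal (1 / measure (F \<mu>) {0<..} + K / (1 - exp (- (\<theta>d * \<mu> / 8))))"
              by (rule mult_left_mono[OF ET]) simp
            also have "\<dots> = ennreal (g \<mu> * \<mu> * (1 / measure (F \<mu>) {0<..} + K / (1 - exp (- (\<theta>d * \<mu> / 8)))))"
            proof -
              have "exp (- (\<theta>d * \<mu> / 8)) < 1" using \<theta>d \<mu> by simp
              then have "0 \<le> 1 / measure (F \<mu>) {0<..} + K / (1 - exp (- (\<theta>d * \<mu> / 8)))"
                using pp[OF \<mu>] K0 by simp
              then show ?thesis using g0 \<mu> by (intro ennreal_mult[symmetric]) auto
            qed
            also have "\<dots> \<le> ennreal ((\<mu> / measure (F \<mu>) {0<..}) * g \<mu> + K * L * (g \<mu> * \<mu> + g \<mu>))"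
              unfolding L_def by (intro ennreal_leI B1_real g0 \<mu> pp[OF \<mu>] \<theta>d K0)
            also have "\<dots> = ennreal (cond_mean_pos (F \<mu>) * g \<mu>) + ennreal (K * L * (g \<mu> * \<mu> + g \<mu>))"
              using cmp[OF \<mu>] g0 \<mu> pp[OF \<mu>] K0 L by (subst ennreal_plus[symmetric]) auto
            finally show "ennreal (g \<mu> * \<mu>) * (\<integral>\<^sup>+ x. stop_time (b n * \<zeta> n) x \<partial>iid_seq (F \<mu>))
                \<le> ennreal (cond_mean_pos (F \<mu>) * g \<mu>) + ennreal (K * L * (g \<mu> * \<mu> + g \<mu>))" .
          qed
          also have "\<dots> \<le> ennreal (lam + \<epsilon>)" using KL by (intro ennreal_leI) simp
          finally show ?case .
        qed
      qed
    qed
  next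
    assume B2: "cond_B2 F"
    then have lim: "((\<lambda>\<gamma>. SUP \<mu>\<in>{0<..}. measure (F \<mu>) {..\<gamma> * \<mu>}) \<longlongrightarrow> 0) (at_right 0)"
      and mgfB: "\<forall>\<delta>. 0 < \<delta> \<and> \<delta> \<le> 1 \<longrightarrow> (\<exists>\<tau>>0. \<forall>\<mu>>0. \<forall>\<theta>. 0 < \<theta> * \<mu> \<and> \<theta> * \<mu> \<le> \<tau> \<longrightarrow>
        mgf (F \<mu>) \<theta> \<le> ennreal (exp ((1 + \<delta>) * \<theta> * \<mu>)) \<and>
        mgf (F \<mu>) (- \<theta>) \<le> ennreal (exp (- (1 - \<delta>) * \<theta> * \<mu>)))"
      unfolding cond_B2_def by auto
    from mp[OF spec[OF mgfB, of "1/2"] half] obtain \<tau> where \<tau>: "\<tau> > 0"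
      and h\<tau>: "\<forall>\<mu>>0. \<forall>\<theta>. 0 < \<theta> * \<mu> \<and> \<theta> * \<mu> \<le> \<tau> \<longrightarrow>
        mgf (F \<mu>) \<theta> \<le> ennreal (exp ((1 + 1/2) * \<theta> * \<mu>)) \<and>
        mgf (F \<mu>) (- \<theta>) \<le> ennreal (exp (- (1 - 1/2) * \<theta> * \<mu>))" by blast
    have mg: "mgf (F \<mu>) (- (\<tau> / \<mu>)) \<le> ennreal (exp (- (1/2) * (\<tau> / \<mu>) * \<mu>))" if "0 < \<mu>" for \<mu>
    proof -
      have "0 < (\<tau> / \<mu>) * \<mu> \<and> (\<tau> / \<mu>) * \<mu> \<le> \<tau>" using \<tau> that by simp
      then have "mgf (F \<mu>) (- (\<tau> / \<mu>)) \<le> ennreal (exp (- (1 - 1/2) * (\<tau> / \<mu>) * \<mu>))"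
        using h\<tau> that by blast
      then show ?thesis by simp
    qed
    have tm: "(\<tau> / \<mu>) * \<mu> = \<tau>" if "0 < \<mu>" for \<mu> using that by simp
    have th0: "0 \<le> \<tau> / \<mu>" if "0 < \<mu>" for \<mu> using that \<tau> by simp
    show ?thesis
    proof
      show "\<exists>K::real. \<forall>\<^sub>F n in sequentially. \<forall>\<mu>. real n powr (- \<omega>) \<le> \<mu> \<longrightarrow>
            ennreal (min \<mu> 1) * (\<integral>\<^sup>+ x. stop_time (b n * \<zeta> n) x \<partial>iid_seq (F \<mu>)) \<le> ennreal K"
      proof (intro exI)
        show "\<forall>\<^sub>F n in sequentially. \<forall>\<mu>. real n powr (- \<omega>) \<le> \<mu> \<longrightarrow>
            ennreal (min \<mu> 1) * (\<integral>\<^sup>+ x. stop_time (b n * \<zeta> n) x \<partial>iid_seq (F \<mu>)) \<le> ennreal (1 + 4 / \<tau>)"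
          using ev[OF q14]
        proof eventually_elim
          case (elim n)
          show ?case
          proof (intro allI impI)
            fix \<mu> assume d: "real n powr (- \<omega>) \<le> \<mu>"
            have \<mu>: "0 < \<mu>" using dpos[of n] elim d by linarith
            have c: "b n * \<zeta> n \<le> \<mu> / 4" using elim d by linarith
            have "(\<integral>\<^sup>+ x. stop_time (b n * \<zeta> n) x \<partial>iid_seq (F \<mu>)) \<le> ennreal (1 / (1 - exp (- ((\<tau> / \<mu>) * \<mu> / 4))))"
              using \<tau> \<mu> by (intro ET_chernoff[OF Fp[OF \<mu>] Fs[OF \<mu>] th0[OF \<mu>] mg[OF \<mu>] c]) (simp add: tm[OF \<mu>])
            also have "\<dots> = ennreal (1 / (1 - exp (- (\<tau> / 4))))" using tm[OF \<mu>] by simp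
            finally have ET: "(\<integral>\<^sup>+ x. stop_time (b n * \<zeta> n) x \<partial>iid_seq (F \<mu>)) \<le> ennreal (1 / (1 - exp (- (\<tau> / 4))))" .
            have e1: "exp (- (\<tau> / 4)) < 1" using \<tau> by simp
            have gb: "1 / (1 - exp (- (\<tau> / 4))) \<le> 1 + 4 / \<tau>" using geo_bound[of "\<tau> / 4"] \<tau> by simp
            have "ennreal (min \<mu> 1) * (\<integral>\<^sup>+ x. stop_time (b n * \<zeta> n) x \<partial>iid_seq (F \<mu>))
                \<le> ennreal (min \<mu> 1) * ennreal (1 / (1 - exp (- (\<tau> / 4))))"
              by (rule mult_left_mono[OF ET]) simp
            also have "\<dots> = ennreal (min \<mu> 1 * (1 / (1 - exp (- (\<tau> / 4)))))"
              using \<mu> e1 by (intro ennreal_mult[symmetric]) auto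
            also have "\<dots> \<le> ennreal (1 * (1 + 4 / \<tau>))"
              using \<mu> e1 gb by (intro ennreal_leI mult_mono) auto
            finally show "ennreal (min \<mu> 1) * (\<integral>\<^sup>+ x. stop_time (b n * \<zeta> n) x \<partial>iid_seq (F \<mu>)) \<le> ennreal (1 + 4 / \<tau>)"
              by simp
          qed
        qed
      qed
    next
      show "\<forall>\<epsilon>>0. \<forall>\<^sub>F n in sequentially.
            (\<integral>\<^sup>+ \<mu>. ennreal (g \<mu> * \<mu>) * (\<integral>\<^sup>+ x. stop_time (b n * \<zeta> n) x \<partial>iid_seq (F \<mu>))
                     * indicator {real n powr (- \<omega>)..} \<mu> \<partial>lborel) \<le> ennreal (lam + \<epsilon>)"
      proof (intro allI impI)
        fix \<epsilon> :: real assume \<epsilon>: "0 < \<epsilon>"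
        define r where "r = exp (- (\<tau> / 8))"
        have r1: "r < 1" "0 < r" using \<tau> unfolding r_def by auto
        define e' where "e' = \<epsilon> / (2 * (lam + 1))"
        have e'0: "0 < e'" using \<epsilon> lam_nonneg unfolding e'_def by simp
        have "(\<lambda>n. r ^ n) \<longlonglongrightarrow> 0" using r1 by (intro LIMSEQ_power_zero) auto
        from order_tendstoD(2)[OF this, of "e' * (1 - r)"] e'0 r1
        obtain N0 where N0: "\<forall>n\<ge>N0. r ^ n < e' * (1 - r)"
          unfolding eventually_sequentially by auto
        define N where "N = N0"
        have N: "r ^ (N + 1) < e' * (1 - r)" using N0[rule_format, of "N0 + 1"] unfolding N_def by linarith
        have Nb: "r ^ (N + 1) / (1 - r) \<le> e'" using N r1 by (simp add: pos_divide_le_eq)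
        define e1 where "e1 = e' / (real N + 1)"
        have e10: "0 < e1" using e'0 unfolding e1_def by simp
        from order_tendstoD(2)[OF lim e10] obtain \<gamma>0 where \<gamma>0: "\<gamma>0 > 0"
          and h\<gamma>: "\<And>y. 0 < y \<Longrightarrow> y < \<gamma>0 \<Longrightarrow> (SUP \<mu>\<in>{0<..}. measure (F \<mu>) {..y * \<mu>}) < e1"
          unfolding eventually_at_right_field by auto
        define \<eta> where "\<eta> = min (1/4) (\<gamma>0 / (real N + 1))"
        have \<eta>0: "0 < \<eta>" "\<eta> \<le> 1/4" using \<gamma>0 unfolding \<eta>_def by (simp, linarith)
        have \<eta>\<gamma>: "\<eta> \<le> \<gamma>0 / (real N + 1)" unfolding \<eta>_def by simp
        have e1b: "measure (F \<mu>) {..real t * \<eta> * \<mu>} \<le> e1" if \<mu>: "0 < \<mu>" and t: "1 \<le> t" "t \<le> N" for \<mu> t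
        proof -
          have "real t * \<eta> \<le> real N * (\<gamma>0 / (real N + 1))"
            using t \<eta>0 \<eta>\<gamma> by (intro mult_mono) auto
          also have "\<dots> < \<gamma>0" using \<gamma>0 by (simp add: field_simps)
          finally have lt: "real t * \<eta> < \<gamma>0" .
          have pos: "0 < real t * \<eta>" using t \<eta>0 by simp
          have "measure (F \<mu>) {..real t * \<eta> * \<mu>} \<le> (SUP \<mu>\<in>{0<..}. measure (F \<mu>) {..(real t * \<eta>) * \<mu>})"
          proof (rule cSUP_upper)
            show "\<mu> \<in> {0<..}" using \<mu> by simp
            show "bdd_above ((\<lambda>\<mu>. measure (F \<mu>) {..(real t * \<eta>) * \<mu>}) ` {0<..})"
              by (rule bdd_aboveI2[where M=1]) (use p1' in auto)
          qed
          also have "\<dots> < e1" by (rule h\<gamma>[OF pos lt])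
          finally show ?thesis by simp
        qed
        define K where "K = (real N + 1) * e1 + r ^ (N + 1) / (1 - r)"
        have K0: "0 \<le> K" using e10 r1 unfolding K_def by simp
        have "K \<le> e' + e'" unfolding K_def e1_def using Nb by simp
        then have "K * (lam + 1) \<le> (e' + e') * (lam + 1)" using lam_nonneg by (intro mult_right_mono) auto
        also have "\<dots> = \<epsilon>"
        proof -
          have "e' * (2 * (lam + 1)) = \<epsilon>" unfolding e'_def using lam_nonneg by simp
          then show ?thesis by (simp add: algebra_simps)
        qed
        finally have KL: "K * (lam + 1) \<le> \<epsilon>" .
        show "\<forall>\<^sub>F n in sequentially.
            (\<integral>\<^sup>+ \<mu>. ennreal (g \<mu> * \<mu>) * (\<integral>\<^sup>+ x. stop_time (b n * \<zeta> n) x \<partial>iid_seq (F \<mu>))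
                     * indicator {real n powr (- \<omega>)..} \<mu> \<partial>lborel) \<le> ennreal (lam + \<epsilon>)"
          using ev[OF \<eta>0(1)]
        proof eventually_elim
          case (elim n)
          let ?d = "real n powr (- \<omega>)"
          have "(\<integral>\<^sup>+ \<mu>. ennreal (g \<mu> * \<mu>) * (\<integral>\<^sup>+ x. stop_time (b n * \<zeta> n) x \<partial>iid_seq (F \<mu>))
                     * indicator {?d..} \<mu> \<partial>lborel) \<le> ennreal (lam + K * (lam + 1))"
          proof (rule integ[OF g_meas g_nonneg g_density lam_def lam_nonneg dpos[OF conjunct2[OF elim]] K0])
            fix \<mu> assume d: "?d \<le> \<mu>"
            have \<mu>: "0 < \<mu>" using dpos[of n] elim d by linarith
            show "\<mu> \<le> cond_mean_pos (F \<mu>)" by (rule cmpge[OF \<mu>])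
            have "\<eta> * ?d \<le> \<eta> * \<mu>" using d \<eta>0 by (intro mult_left_mono) auto
            then have c: "b n * \<zeta> n \<le> \<eta> * \<mu>" using elim by linarith
            have g0: "0 \<le> g \<mu>" using g_nonneg \<mu> by auto
            have "(\<integral>\<^sup>+ x. stop_time (b n * \<zeta> n) x \<partial>iid_seq (F \<mu>))
               \<le> ennreal (1 + (real N + 1) * e1 + exp (- (\<tau> / 8)) ^ (N + 1) / (1 - exp (- (\<tau> / 8))))"
              by (rule ET_B2[OF Fp[OF \<mu>] Fs[OF \<mu>] Fnn[OF \<mu>] th0[OF \<mu>] mg[OF \<mu>] tm[OF \<mu>] \<tau> \<eta>0 c \<mu> e1b[OF \<mu>]])
                 (use e10 in auto)
            then have ET: "(\<integral>\<^sup>+ x. stop_time (b n * \<zeta> n) x \<partial>iid_seq (F \<mu>)) \<le> ennreal (1 + K)"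
              unfolding K_def r_def by (simp add: add.assoc)
            have "ennreal (g \<mu> * \<mu>) * (\<integral>\<^sup>+ x. stop_time (b n * \<zeta> n) x \<partial>iid_seq (F \<mu>))
                \<le> ennreal (g \<mu> * \<mu>) * ennreal (1 + K)"
              by (rule mult_left_mono[OF ET]) simp
            also have "\<dots> = ennreal (g \<mu> * \<mu> * (1 + K))"
              using g0 \<mu> K0 by (intro ennreal_mult[symmetric]) auto
            also have "\<dots> \<le> ennreal (cond_mean_pos (F \<mu>) * g \<mu> + K * (g \<mu> * \<mu> + g \<mu>))"
            proof (intro ennreal_leI)
              have A: "g \<mu> * \<mu> \<le> cond_mean_pos (F \<mu>) * g \<mu>"
                using mult_right_mono[OF cmpge[OF \<mu>] g0] by (simp add: mult.commute)
              have B: "K * (g \<mu> * \<mu>) \<le> K * (g \<mu> * \<mu> + g \<mu>)" using K0 g0 by (intro mult_left_mono) auto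
              show "g \<mu> * \<mu> * (1 + K) \<le> cond_mean_pos (F \<mu>) * g \<mu> + K * (g \<mu> * \<mu> + g \<mu>)"
                using A B by (simp add: algebra_simps)
            qed
            also have "\<dots> = ennreal (cond_mean_pos (F \<mu>) * g \<mu>) + ennreal (K * (g \<mu> * \<mu> + g \<mu>))"
            proof (rule ennreal_plus)
              show "0 \<le> cond_mean_pos (F \<mu>) * g \<mu>" using cmpge[OF \<mu>] \<mu> g0 by simp
              show "0 \<le> K * (g \<mu> * \<mu> + g \<mu>)" using K0 g0 \<mu> by simp
            qed
            finally show "ennreal (g \<mu> * \<mu>) * (\<integral>\<^sup>+ x. stop_time (b n * \<zeta> n) x \<partial>iid_seq (F \<mu>))
                \<le> ennreal (cond_mean_pos (F \<mu>) * g \<mu>) + ennreal (K * (g \<mu> * \<mu> + g \<mu>))" .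
          qed
          also have "\<dots> \<le> ennreal (lam + \<epsilon>)" using KL by (intro ennreal_leI) simp
          finally show ?case .
        qed
      qed
    qed
  qed
qed


end
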